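(* Let $d\ge2$ and let $Q,Q'$ be qplexes. Then $Q$ and $Q'$ are isomorphic if and only if there is a type-preserving measurement for $Q$ whose stretched measurement matrix $R$ satisfies $Q'=RQ$.
   Context: Fix an integer $d\ge 2$. $\langle\cdot,\cdot\rangle$ is the standard inner product on $\mathbb{R}^{d^2}$, $\|\cdot\|$ the Euclidean norm. $\Delta=\{p\in\mathbb{R}^{d^2}: p(i)\ge0,\ \sum_ip(i)=1\}$; $H=\{u\in\mathbb{R}^{d^2}:\sum_i u(i)=1\}$; $c=(1/d^2,\dots,1/d^2)$. For $A\subseteq H$ the polar is $A^*=\{u\in H:\langle u,v\rangle\ge\frac{1}{d(d+1)}\ \forall v\in A\}$. Out-ball $B_{\rm o}=\{u\in H:\|u-c\|\le r_{\rm o}\}$, $r_{\rm o}^2=\frac{d-1}{d^2(d+1)}$. A qplex is a set $Q\subseteq\Delta\cap B_{\rm o}$ with $Q^*=Q$. Two qplexes $Q,Q'$ are isomorphic if there is a linear bijection $f:\mathbb{R}^{d^2}\to\mathbb{R}^{d^2}$ with $f(Q)=Q'$ and $\langle f(q_1),f(q_2)\rangle=\langle q_1,q_2\rangle$ for all $q_1,q_2\in Q$. A measurement (with $d^2$ outcomes) is an array of reals $r(i|j)\ge0$ with $\sum_i r(i|j)=1$ for every $j$. For $q\in Q$, $q_r(i)=\sum_j\big[(d+1)q(j)-\frac1d\big]r(i|j)$ and $Q_r=\{q_r:q\in Q\}$; the measurement is type-preserving for $Q$ if $Q_r$ is a qplex. Its stretched measurement matrix is $R_{ij}=(d+1)r(i|j)-\frac1d\sum_k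 r(i|k)$, so that $q_r=Rq$. *)

theory Defs
  imports "HOL-Analysis.Analysis"
begin

text \<open>Vectors of R^(d^2) are modelled as real^'n with CARD('n) = d^2.\<close>

definition prob_simplex :: "(real^'n::finite) set" where
  "prob_simplex = {p. (\<forall>i. p$i \<ge> 0) \<and> (\<Sum>i\<in>UNIV. p$i) = 1}"

definition unit_sum_hyperplane :: "(real^'n::finite) set" where
  "unit_sum_hyperplane = {u. (\<Sum>i\<in>UNIV. u$i) = 1}"

definition centre :: "nat \<Rightarrow> real^'n::finite" where
  "centre d = (\<chi> i. 1 / (real d)^2)"

definition polar :: "nat \<Rightarrow> (real^'n::finite) set \<Rightarrow> (real^'n) set" where
  "polar d A = {u \<in> unit_sum_hyperplane. \<forall>v\<in>A. inner u v \<ge> 1 / (real d * (real d + 1))}"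

definition r_out :: "nat \<Rightarrow> real" where
  "r_out d = sqrt ((real d - 1) / ((real d)^2 * (real d + 1)))"

definition out_ball :: "nat \<Rightarrow> (real^'n::finite) set" where
  "out_ball d = {u \<in> unit_sum_hyperplane. norm (u - centre d) \<le> r_out d}"

definition qplex :: "nat \<Rightarrow> (real^'n::finite) set \<Rightarrow> bool" where
  "qplex d Q \<longleftrightarrow> Q \<subseteq> prob_simplex \<inter> out_ball d \<and> polar d Q = Q"

definition qplex_isomorphic :: "(real^'n::finite) set \<Rightarrow> (real^'n) set \<Rightarrow> bool" where
  "qplex_isomorphic Q Q' \<longleftrightarrow>
     (\<exists>f :: real^'n \<Rightarrow> real^'n. linear f \<and> bij f \<and> f ` Q = Q' \<and>
        (\<forall>q1\<in>Q. \<forall>q2\<in>Q. inner (f q1) (f q2) = inner q1 q2))"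

text \<open>A measurement: r i j stands for r(i|j).\<close>
definition measurement :: "('n::finite \<Rightarrow> 'n \<Rightarrow> real) \<Rightarrow> bool" where
  "measurement r \<longleftrightarrow> (\<forall>i j. r i j \<ge> 0) \<and> (\<forall>j. (\<Sum>i\<in>UNIV. r i j) = 1)"

definition meas_apply :: "nat \<Rightarrow> ('n::finite \<Rightarrow> 'n \<Rightarrow> real) \<Rightarrow> real^'n \<Rightarrow> real^'n" where
  "meas_apply d r q = (\<chi> i. \<Sum>j\<in>UNIV. ((real d + 1) * q$j - 1 / real d) * r i j)"

definition type_preserving :: "nat \<Rightarrow> (real^'n::finite) set \<Rightarrow> ('n::finite \<Rightarrow> 'n \<Rightarrow> real) \<Rightarrow> bool" where
  "type_preserving d Q r \<longleftrightarrow> qplex d (meas_apply d r ` Q)"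

definition stretched_matrix :: "nat \<Rightarrow> ('n::finite \<Rightarrow> 'n \<Rightarrow> real) \<Rightarrow> real^'n^'n" where
  "stretched_matrix d r = (\<chi> i j. (real d + 1) * r i j - (1 / real d) * (\<Sum>k\<in>UNIV. r i k))"

end

theory Submission
  imports Defs
begin


lemma sum_const_card: "(\<Sum>i\<in>(UNIV::'n::finite set). (c::real)) = real CARD('n) * c"
  by simp

lemma inner_sum_eq: "(x::real^'n::finite) \<bullet> y = (\<Sum>i\<in>UNIV. x$i * y$i)"
  by (simp add: inner_vec_def)

lemma aux1: "(x::real) > 0 \<Longrightarrow> (x - 1)/(x^2*(x+1)) + 1/x^2 = 2/(x*(x+1))"
proof -
  assume x: "x > 0"
  have D1: "x^2*(x+1) \<noteq> 0" and D2: "x^2 \<noteq> 0" and D3: "x*(x+1) \<noteq> 0" and D4: "x^2*(x+1)*x^2 \<noteq> 0" using x by auto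
  show ?thesis 
    by (simp only: add_frac_eq[OF D1 D2] frac_eq_eq[OF D4 D3]) (simp add: algebra_simps power2_eq_square)
qed

lemma qplex_sq:
  fixes Q :: "(real^'n::finite) set"
  assumes d: "d \<ge> 2" and card: "CARD('n) = d^2" and qp: "qplex d Q" and x: "x \<in> Q"
  shows "x \<bullet> x \<le> 2 / (real d * (real d + 1))"
proof -
  have dpos: "real d > 0" using d by simp
  have xH: "(\<Sum>i\<in>UNIV. x$i) = 1" and nb: "norm (x - centre d) \<le> r_out d"
    using qp x unfolding qplex_def out_ball_def unit_sum_hyperplane_def by auto
  have r2: "(r_out d)^2 = (real d - 1) / ((real d)^2 * (real d + 1))"
    unfolding r_out_def using d by (simp add: real_sqrt_pow2)
  have "(norm (x - centre d))^2 \<le> (r_out d)^2"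
    using nb by (simp add: power_mono)
  hence A: "(x - centre d) \<bullet> (x - centre d) \<le> (real d - 1) / ((real d)^2 * (real d + 1))"
    using r2 by (simp add: power2_norm_eq_inner)
  have xc: "x \<bullet> centre d = 1 / (real d)^2"
    unfolding inner_sum_eq centre_def using xH by (simp add: sum_divide_distrib[symmetric])
  have cc: "centre d \<bullet> (centre d :: real^'n) = 1 / (real d)^2"
    unfolding inner_sum_eq centre_def using card dpos by (simp add: power2_eq_square field_simps)
  have "(x - centre d) \<bullet> (x - centre d) = x \<bullet> x - 2 * (x \<bullet> centre d) + centre d \<bullet> (centre d :: real^'n)"
    by (simp add: inner_diff_left inner_diff_right inner_commute)
  with A xc cc have "x \<bullet> x \<le> (real d - 1) / ((real d)^2 * (real d + 1)) + 1 / (real d)^2" by simp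
  also have "\<dots> = 2 / (real d * (real d + 1))"
    using aux1[OF dpos] by simp
  finally show ?thesis .
qed

lemma qplex_inner_le:
  fixes Q :: "(real^'n::finite) set"
  assumes d: "d \<ge> 2" and card: "CARD('n) = d^2" and qp: "qplex d Q" and x: "x \<in> Q" and y: "y \<in> Q"
  shows "x \<bullet> y \<le> 2 / (real d * (real d + 1))"
proof -
  have "0 \<le> (x - y) \<bullet> (x - y)" by simp
  hence "2 * (x \<bullet> y) \<le> x \<bullet> x + y \<bullet> y" by (simp add: inner_diff_left inner_diff_right inner_commute)
  thus ?thesis using qplex_sq[OF d card qp x] qplex_sq[OF d card qp y] by linarith
qed

definition uvec :: "nat \<Rightarrow> 'n \<Rightarrow> real^'n::finite" where
  "uvec d j = (\<chi> i. ((if i = j then 1 else 0) + 1 / real d) / (real d + 1))"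

lemma uvec_in:
  fixes Q :: "(real^'n::finite) set"
  assumes d: "d \<ge> 2" and card: "CARD('n) = d^2" and qp: "qplex d Q"
  shows "uvec d j \<in> Q"
proof -
  have dpos: "real d > 0" using d by simp
  have "uvec d j \<in> polar d Q"
    unfolding polar_def unit_sum_hyperplane_def
  proof (intro CollectI conjI ballI)
    have "(\<Sum>i\<in>UNIV. uvec d j $ i) = (\<Sum>i\<in>UNIV. ((if i = j then 1 else 0) + 1 / real d)) / (real d + 1)"
      unfolding uvec_def by (simp add: sum_divide_distrib)
    also have "\<dots> = (1 + real d ^ 2 / real d) / (real d + 1)"
      using card by (simp add: sum.distrib)
    also have "\<dots> = 1" using dpos by (simp add: field_simps power2_eq_square)
    finally show "(\<Sum>i\<in>UNIV. uvec d j $ i) = 1" .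
  next
    fix v assume v: "v \<in> Q"
    hence vD: "\<forall>i. v$i \<ge> 0" "(\<Sum>i\<in>UNIV. v$i) = 1"
      using qp unfolding qplex_def prob_simplex_def by auto
    have e: "\<And>i. uvec d j $ i * v$i = ((if i = j then v$i else 0) + v$i / real d) / (real d + 1)"
      unfolding uvec_def by (simp add: field_simps)
    have "uvec d j \<bullet> v = (\<Sum>i\<in>UNIV. ((if i = j then v$i else 0) + v$i / real d)) / (real d + 1)"
      unfolding inner_sum_eq e by (simp add: sum_divide_distrib)
    also have "\<dots> = (v$j + 1 / real d) / (real d + 1)"
      using vD(2) by (simp add: sum.distrib sum_divide_distrib[symmetric])
    finally have "uvec d j \<bullet> v = (v$j + 1 / real d) / (real d + 1)" .
    moreover have "1 / (real d * (real d + 1)) \<le> (v$j + 1 / real d) / (real d + 1)"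
    proof -
      have "1 / (real d * (real d + 1)) = (1 / real d) / (real d + 1)" by simp
      also have "\<dots> \<le> (v$j + 1 / real d) / (real d + 1)"
        using vD(1) dpos by (intro divide_right_mono) auto
      finally show ?thesis .
    qed
    ultimately show "1 / (real d * (real d + 1)) \<le> uvec d j \<bullet> v" by simp
  qed
  thus ?thesis using qp unfolding qplex_def by simp
qed

lemma meas_apply_eq:
  assumes "(\<Sum>i\<in>UNIV. q$i) = 1"
  shows "meas_apply d r q = stretched_matrix d r *v (q::real^'n::finite)"
proof -
  have "\<And>i. (\<Sum>j\<in>UNIV. ((real d + 1) * q$j - 1 / real d) * r i j)
     = (\<Sum>j\<in>UNIV. ((real d + 1) * r i j - (1 / real d) * (\<Sum>k\<in>UNIV. r i k)) * q$j)"
  proof -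
    fix i
    have a: "(\<Sum>j\<in>UNIV. ((real d + 1) * q$j - 1 / real d) * r i j)
      = (real d + 1) * (\<Sum>j\<in>UNIV. q$j * r i j) - (1 / real d) * (\<Sum>j\<in>UNIV. r i j)"
      by (simp add: left_diff_distrib sum_subtractf sum_distrib_left mult.assoc)
    define s where "s = (\<Sum>k\<in>UNIV. r i k)"
    have b: "(\<Sum>j\<in>UNIV. ((real d + 1) * r i j - (1 / real d) * (\<Sum>k\<in>UNIV. r i k)) * q$j)
      = (real d + 1) * (\<Sum>j\<in>UNIV. q$j * r i j) - (1 / real d) * (\<Sum>k\<in>UNIV. r i k) * (\<Sum>j\<in>UNIV. q$j)"
    proof -
      have "(\<Sum>j\<in>UNIV. ((real d + 1) * r i j - (1 / real d) * s) * q$j)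
          = (\<Sum>j\<in>UNIV. (real d + 1) * (q$j * r i j) - ((1 / real d) * s) * q$j)"
        by (rule sum.cong) (auto simp: algebra_simps)
      also have "\<dots> = (real d + 1) * (\<Sum>j\<in>UNIV. q$j * r i j) - ((1 / real d) * s) * (\<Sum>j\<in>UNIV. q$j)"
        by (simp only: sum_subtractf sum_distrib_left)
      finally show ?thesis unfolding s_def .
    qed
    show "?thesis i" unfolding a b using assms by simp
  qed
  thus ?thesis unfolding meas_apply_def stretched_matrix_def matrix_vector_mult_def
    by (simp add: vec_eq_iff)
qed



lemma back_dir:
  fixes Q Q' :: "(real^'n::finite) set" and r :: "'n \<Rightarrow> 'n \<Rightarrow> real"
  assumes d: "d \<ge> 2" and card: "CARD('n) = d^2"
    and qpQ: "qplex d Q" and qpQ': "qplex d Q'"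
    and meas: "measurement r" and img: "Q' = (\<lambda>q. stretched_matrix d r *v q) ` Q"
  shows "qplex_isomorphic Q Q'"
proof -
  define R where "R = stretched_matrix d r"
  define t where "t k = (\<Sum>j\<in>UNIV. r k j)" for k
  define \<rho> where "\<rho> k = (\<chi> j. r k j :: real^'n)" for k
  have dpos: "real d > 0" using d by simp
  have nz[simp]: "real d \<noteq> 0" "real d + 1 \<noteq> 0" "real d * (real d + 1) \<noteq> 0"
    "1 + real d \<noteq> 0" using dpos by auto
  have dn0[simp]: "d \<noteq> 0" using d by simp
  have nz2[simp]: "real d + real d * real d \<noteq> 0"
    using add_pos_pos[OF dpos mult_pos_pos[OF dpos dpos]] by linarith
  have rnn: "\<And>i j. r i j \<ge> 0" and rcol: "\<And>j. (\<Sum>i\<in>UNIV. r i j) = 1"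
    using meas unfolding measurement_def by auto
  have Qsum: "\<And>q. q \<in> Q \<Longrightarrow> (\<Sum>i\<in>UNIV. q$i) = 1"
    using qpQ unfolding qplex_def prob_simplex_def by auto
  have Q'nn: "\<And>q i. q \<in> Q' \<Longrightarrow> q$i \<ge> 0"
    using qpQ' unfolding qplex_def prob_simplex_def by auto
  have RQ: "(R *v q)$k = (real d + 1) * (\<rho> k \<bullet> q) - t k / real d"
    if "(\<Sum>i\<in>UNIV. q$i) = 1" for q k
  proof -
    have "(R *v q)$k = (\<Sum>j\<in>UNIV. ((real d + 1) * r k j - (1 / real d) * t k) * q$j)"
      unfolding R_def stretched_matrix_def matrix_vector_mult_def t_def by simp
    also have "\<dots> = (\<Sum>j\<in>UNIV. (real d + 1) * (r k j * q$j) - ((1 / real d) * t k) * q$j)"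
      by (rule sum.cong) (auto simp: algebra_simps)
    also have "\<dots> = (real d + 1) * (\<Sum>j\<in>UNIV. r k j * q$j) - ((1 / real d) * t k) * (\<Sum>j\<in>UNIV. q$j)"
      by (simp only: sum_subtractf sum_distrib_left)
    finally show ?thesis using that unfolding \<rho>_def inner_sum_eq by simp
  qed
  have low: "t k / (real d * (real d + 1)) \<le> \<rho> k \<bullet> q" if q: "q \<in> Q" for q k
  proof -
    have "R *v q \<in> Q'" using img q unfolding R_def by auto
    hence "0 \<le> (R *v q)$k" by (rule Q'nn)
    hence "0 \<le> (real d + 1) * (\<rho> k \<bullet> q) - t k / real d" using RQ[OF Qsum[OF q]] by simp
    hence "t k \<le> (real d * (real d + 1)) * (\<rho> k \<bullet> q)" using dpos by (simp add: field_simps)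
    moreover have D: "real d * (real d + 1) > 0" using dpos by simp
    ultimately show ?thesis by (simp add: pos_divide_le_eq[OF D] mult.commute)
  qed
  have tnn: "t k \<ge> 0" for k unfolding t_def by (rule sum_nonneg) (simp add: rnn)
  have pQ: "(1 / t k) *\<^sub>R \<rho> k \<in> Q" if tp: "t k > 0" for k
  proof -
    have "(1 / t k) *\<^sub>R \<rho> k \<in> polar d Q"
      unfolding polar_def unit_sum_hyperplane_def
    proof (intro CollectI conjI ballI)
      show "(\<Sum>i\<in>UNIV. ((1 / t k) *\<^sub>R \<rho> k) $ i) = 1"
        using tp unfolding \<rho>_def t_def by (simp add: sum_divide_distrib[symmetric])
    next
      fix v assume v: "v \<in> Q"
      have "((1 / t k) *\<^sub>R \<rho> k) \<bullet> v = (\<rho> k \<bullet> v) / t k" by simp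
      moreover have "1 / (real d * (real d + 1)) \<le> (\<rho> k \<bullet> v) / t k"
        using low[OF v, of k] tp dpos by (simp add: field_simps)
      ultimately show "1 / (real d * (real d + 1)) \<le> ((1 / t k) *\<^sub>R \<rho> k) \<bullet> v" by simp
    qed
    thus ?thesis using qpQ unfolding qplex_def by simp
  qed
  have pre: "\<exists>q\<in>Q. R *v q = uvec d i" for i
    using uvec_in[OF d card qpQ', of i] img unfolding R_def by auto
  have uii: "uvec d i $ i = 1 / real d" for i
    unfolding uvec_def using dpos by (simp add: field_simps)
  have key: "\<rho> i \<bullet> q = (1 + t i) / (real d * (real d + 1))" if "q \<in> Q" "R *v q = uvec d i" for i q
  proof -
    have a: "(R *v q)$i = (real d + 1) * (\<rho> i \<bullet> q) - t i / real d"
      by (rule RQ[OF Qsum[OF that(1)]])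
    have "(real d + 1) * (\<rho> i \<bullet> q) - t i / real d = 1 / real d"
      using a that(2) uii[of i] by metis
    thus ?thesis using dpos by (simp add: field_simps)
  qed
  have tge: "t i \<ge> 1" for i
  proof -
    obtain q where q: "q \<in> Q" "R *v q = uvec d i" using pre by blast
    have e: "\<rho> i \<bullet> q = (1 + t i) / (real d * (real d + 1))" by (rule key[OF q])
    show ?thesis
    proof (cases "t i = 0")
      case True
      hence "\<forall>j\<in>UNIV. r i j = 0" unfolding t_def using rnn by (subst sum_nonneg_eq_0_iff[symmetric]) auto
      hence "\<rho> i = 0" unfolding \<rho>_def by (simp add: vec_eq_iff)
      hence "(1 + t i) / (real d * (real d + 1)) = 0" using e by simp
      thus ?thesis using True dpos by simp
    next
      case False
      hence tp: "t i > 0" using tnn[of i] by simp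
      have "((1 / t i) *\<^sub>R \<rho> i) \<bullet> q \<le> 2 / (real d * (real d + 1))"
        by (rule qplex_inner_le[OF d card qpQ pQ[OF tp] q(1)])
      hence pq: "(\<rho> i \<bullet> q) / t i \<le> 2 / (real d * (real d + 1))" by simp
      have "\<rho> i \<bullet> q = t i * ((\<rho> i \<bullet> q) / t i)" using tp by simp
      also have "\<dots> \<le> t i * (2 / (real d * (real d + 1)))"
        using pq tp by (intro mult_left_mono) auto
      finally have "(1 + t i) / (real d * (real d + 1)) \<le> (2 * t i) / (real d * (real d + 1))"
        using e by simp
      moreover have D: "real d * (real d + 1) > 0" using dpos by simp
      ultimately have "1 + t i \<le> 2 * t i" by (simp add: divide_le_cancel)
      thus ?thesis by simp
    qed
  qed
  have tsum: "(\<Sum>i\<in>UNIV. t i) = real CARD('n)"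
    unfolding t_def using rcol by (subst sum.swap) simp
  have t1: "t i = 1" for i
  proof -
    have "(\<Sum>i\<in>UNIV. t i - 1) = 0" using tsum by (simp add: sum_subtractf)
    hence "\<forall>i\<in>UNIV. t i - 1 = 0" using tge by (subst sum_nonneg_eq_0_iff[symmetric]) auto
    thus ?thesis by simp
  qed
  have \<rho>Q: "\<rho> i \<in> Q" for i using pQ[of i] t1[of i] by simp
  have R\<rho>: "R *v \<rho> i = uvec d i" for i
  proof -
    obtain q where q: "q \<in> Q" "R *v q = uvec d i" using pre by blast
    have e: "\<rho> i \<bullet> q = 2 / (real d * (real d + 1))" using key[OF q] t1[of i] by simp
    have "(\<rho> i - q) \<bullet> (\<rho> i - q) = \<rho> i \<bullet> \<rho> i + q \<bullet> q - 2 * (\<rho> i \<bullet> q)"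
      by (simp add: inner_diff_left inner_diff_right inner_commute)
    also have "\<dots> \<le> 0" using qplex_sq[OF d card qpQ \<rho>Q[of i]] qplex_sq[OF d card qpQ q(1)] e by simp
    finally have "(\<rho> i - q) \<bullet> (\<rho> i - q) \<le> 0" .
    hence "(\<rho> i - q) \<bullet> (\<rho> i - q) = 0" using inner_ge_zero[of "\<rho> i - q"] by linarith
    hence "\<rho> i = q" by simp
    thus ?thesis using q by simp
  qed
  have gram: "\<rho> k \<bullet> \<rho> i = (uvec d i $ k + 1 / real d) / (real d + 1)" for i k
  proof -
    have a: "(R *v \<rho> i)$k = (real d + 1) * (\<rho> k \<bullet> \<rho> i) - t k / real d"
      by (rule RQ[OF Qsum[OF \<rho>Q[of i]]])
    have "(real d + 1) * (\<rho> k \<bullet> \<rho> i) - t k / real d = uvec d i $ k"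
      using a R\<rho>[of i] by metis
    thus ?thesis using t1[of k] dpos by (simp add: field_simps)
  qed
  have Rent: "R$i$j = (real d + 1) * r i j - 1 / real d" for i j
    using t1[of i] unfolding R_def stretched_matrix_def t_def by simp
  have ent: "(R ** transpose R)$i$k = mat 1 $ i $ k" for i k
  proof -
    define a where "a = real d + 1"
    define c where "c = 1 / real d"
    have ra: "\<And>x y. (a*x - c)*(a*y - c) = a^2*(x*y) - (a*c)*x - (a*c)*y + c^2"
      by (simp add: algebra_simps power2_eq_square)
    have "(R ** transpose R)$i$k = (\<Sum>j\<in>UNIV. (a * r i j - c) * (a * r k j - c))"
      unfolding matrix_matrix_mult_def transpose_def Rent a_def c_def by simp
    also have "\<dots> = (\<Sum>j\<in>UNIV. a^2*(r i j * r k j) - (a*c)*r i j - (a*c)*r k j + c^2)"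
      unfolding ra ..
    also have "\<dots> = a^2 * (\<rho> i \<bullet> \<rho> k) - (a*c) * t i - (a*c) * t k + real CARD('n) * c^2"
      unfolding \<rho>_def inner_sum_eq t_def by (simp add: sum.distrib sum_subtractf sum_distrib_left)
    also have "\<dots> = a^2 * ((((if i = k then 1 else 0) + c) / a + c) / a) - 2 * (a*c) + (real d)^2 * c^2"
      unfolding gram t1 card uvec_def a_def[symmetric] c_def[symmetric] by (simp add: algebra_simps)
    also have "\<dots> = (if i = k then 1 else 0)"
    proof -
      have an: "a \<noteq> 0" unfolding a_def by simp
      have g: "\<And>x. a^2 * (((x + c) / a + c) / a) = x + c + a * c"
        using an by (simp add: field_simps power2_eq_square)
      have ac: "a * c = 1 + c" unfolding a_def c_def by (simp add: field_simps)
      have dc: "(real d)^2 * c^2 = 1" unfolding c_def by (simp add: power2_eq_square)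
      show ?thesis unfolding g ac dc by simp
    qed
    finally show "(R ** transpose R)$i$k = mat 1 $ i $ k" by (simp add: mat_def)
  qed
  have RRt: "R ** transpose R = mat 1" by (simp add: vec_eq_iff ent)
  hence "transpose R ** R = mat 1" by (simp add: matrix_left_right_inverse)
  hence om: "orthogonal_matrix R" by (simp add: orthogonal_matrix)
  have ot: "orthogonal_transformation (\<lambda>x. R *v x)"
    using om by (simp add: orthogonal_transformation_matrix matrix_of_matrix_vector_mul)
  show ?thesis unfolding qplex_isomorphic_def
  proof (intro exI conjI)
    show "linear (\<lambda>x. R *v x)" by simp
    show "bij (\<lambda>x. R *v x)" using ot by (rule orthogonal_transformation_bij)
    show "(\<lambda>x. R *v x) ` Q = Q'" using img unfolding R_def by simp
    show "\<forall>q1\<in>Q. \<forall>q2\<in>Q. (R *v q1) \<bullet> (R *v q2) = q1 \<bullet> q2"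
      using ot unfolding orthogonal_transformation_def by simp
  qed
qed



lemma fwd_dir:
  fixes Q Q' :: "(real^'n::finite) set" and f :: "real^'n \<Rightarrow> real^'n"
  assumes d: "d \<ge> 2" and card: "CARD('n) = d^2"
    and qpQ: "qplex d Q" and qpQ': "qplex d Q'"
    and lf: "linear f" and fQ: "f ` Q = Q'"
    and fin: "\<forall>q1\<in>Q. \<forall>q2\<in>Q. inner (f q1) (f q2) = inner q1 q2"
  shows "\<exists>r :: 'n \<Rightarrow> 'n \<Rightarrow> real. measurement r \<and> type_preserving d Q r \<and>
        Q' = (\<lambda>q. stretched_matrix d r *v q) ` Q"
proof -
  have dpos: "real d > 0" using d by simp
  have dn0[simp]: "d \<noteq> 0" using d by simp
  have nz[simp]: "real d \<noteq> 0" "real d + 1 \<noteq> 0" "real d * (real d + 1) \<noteq> 0"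
    "1 + real d \<noteq> 0" using dpos by auto
  have nz2[simp]: "real d + real d * real d \<noteq> 0"
    using add_pos_pos[OF dpos mult_pos_pos[OF dpos dpos]] by linarith
  define F where "F = matrix f"
  define one where "one = (\<chi> i. 1 :: real^'n)"
  define r where "r i j = (F$i$j + 1 / real d) / (real d + 1)" for i j
  have Fx: "F *v x = f x" for x unfolding F_def using lf by (simp add: matrix_works linear_matrix_vector_mul_eq)
  have sum_one: "(\<Sum>i\<in>UNIV. x$i) = x \<bullet> one" for x :: "real^'n"
    unfolding one_def inner_sum_eq by simp
  have Qsum: "\<And>q. q \<in> Q \<Longrightarrow> (\<Sum>i\<in>UNIV. q$i) = 1"
    using qpQ unfolding qplex_def prob_simplex_def by auto
  have Q'sum: "\<And>q. q \<in> Q' \<Longrightarrow> (\<Sum>i\<in>UNIV. q$i) = 1"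
    using qpQ' unfolding qplex_def prob_simplex_def by auto
  have Qnn: "\<And>q i. q \<in> Q \<Longrightarrow> q$i \<ge> 0"
    using qpQ unfolding qplex_def prob_simplex_def by auto
  have Q'nn: "\<And>q i. q \<in> Q' \<Longrightarrow> q$i \<ge> 0"
    using qpQ' unfolding qplex_def prob_simplex_def by auto
  have uQ: "uvec d k \<in> Q" for k by (rule uvec_in[OF d card qpQ])
  have fuQ': "f (uvec d k) \<in> Q'" for k using uQ fQ by auto
  have usum: "(\<Sum>k\<in>UNIV. uvec d k) = one"
  proof -
    have "(\<Sum>k\<in>UNIV. uvec d k :: real^'n) $ i = 1" for i
    proof -
      have "(\<Sum>k\<in>UNIV. uvec d k :: real^'n) $ i = (\<Sum>k\<in>UNIV. ((if i = (k::'n) then 1 else 0) + 1 / real d)) / (real d + 1)"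
        unfolding uvec_def by (simp add: sum_component sum_divide_distrib)
      also have "\<dots> = (1 + real d ^ 2 / real d) / (real d + 1)"
        using card by (simp add: sum.distrib)
      also have "\<dots> = 1" using dpos by (simp add: field_simps power2_eq_square)
      finally show ?thesis .
    qed
    thus ?thesis unfolding one_def by (simp add: vec_eq_iff)
  qed
  have axis_eq: "axis j 1 = (real d + 1) *\<^sub>R uvec d j - (1 / real d) *\<^sub>R one" for j
  proof -
    have "(real d + 1) * (((if i = j then 1 else 0) + 1 / real d) / (real d + 1)) - 1 / real d
        = (if i = j then 1 else 0)" for i :: 'n
      by simp
    thus ?thesis unfolding uvec_def one_def axis_def by (simp add: vec_eq_iff)
  qed
  have oneone: "one \<bullet> one = real CARD('n)" unfolding one_def inner_sum_eq by simp
  have f_one: "f one = one"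
  proof -
    have fo: "f one = (\<Sum>k\<in>UNIV. f (uvec d k))"
      unfolding usum[symmetric] using lf by (simp add: linear_sum)
    have a: "f one \<bullet> f one = real CARD('n)"
    proof -
      have "f one \<bullet> f one = (\<Sum>k\<in>(UNIV::'n set). \<Sum>l\<in>(UNIV::'n set). f (uvec d l) \<bullet> f (uvec d k))"
        unfolding fo by (simp add: inner_sum_left inner_sum_right)
      also have "\<dots> = (\<Sum>k\<in>(UNIV::'n set). \<Sum>l\<in>(UNIV::'n set). uvec d l \<bullet> (uvec d k :: real^'n))"
        using fin uQ by simp
      also have "\<dots> = one \<bullet> one"
        unfolding usum[symmetric] by (simp add: inner_sum_left inner_sum_right)
      finally show ?thesis using oneone by simp
    qed
    have b: "f one \<bullet> one = real CARD('n)"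
    proof -
      have e1: "f (uvec d k) \<bullet> one = 1" for k
        using Q'sum[OF fuQ'[of k]] sum_one[of "f (uvec d k)"] by simp
      have "f one \<bullet> one = (\<Sum>k\<in>(UNIV::'n set). f (uvec d k) \<bullet> one)"
        unfolding fo by (simp add: inner_sum_left)
      also have "\<dots> = real CARD('n)" unfolding e1 by simp
      finally show ?thesis .
    qed
    have "(f one - one) \<bullet> (f one - one) = f one \<bullet> f one - 2 * (f one \<bullet> one) + one \<bullet> one"
      by (simp add: inner_diff_left inner_diff_right inner_commute)
    also have "\<dots> = 0" using a b oneone by simp
    finally show ?thesis by simp
  qed
  have colsum: "(\<Sum>i\<in>UNIV. F$i$j) = 1" for j
  proof -
    have "(\<Sum>i\<in>UNIV. F$i$j) = f (axis j 1) \<bullet> one"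
      unfolding F_def matrix_def sum_one[symmetric] by simp
    also have "\<dots> = (real d + 1) * (f (uvec d j) \<bullet> one) - (1 / real d) * (f one \<bullet> one)"
      unfolding axis_eq using lf by (simp add: linear_diff linear_scale inner_diff_left)
    also have "\<dots> = (real d + 1) - (1 / real d) * real CARD('n)"
      using Q'sum[OF fuQ'[of j]] sum_one[of "f (uvec d j)"] f_one oneone by simp
    also have "\<dots> = 1" unfolding card using dpos by (simp add: field_simps power2_eq_square)
    finally show ?thesis .
  qed
  have rowsum: "(\<Sum>j\<in>UNIV. F$i$j) = 1" for i
  proof -
    have "(\<Sum>j\<in>UNIV. F$i$j) = (F *v one) $ i"
      unfolding matrix_vector_mult_def one_def by simp
    also have "\<dots> = 1" unfolding Fx f_one by (simp add: one_def)
    finally show ?thesis .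
  qed
  have rsum_row: "(\<Sum>j\<in>UNIV. r i j) = 1" for i
  proof -
    have "(\<Sum>j\<in>UNIV. r i j) = ((\<Sum>j\<in>UNIV. F$i$j) + real CARD('n) / real d) / (real d + 1)"
      unfolding r_def by (simp add: sum_divide_distrib[symmetric] sum.distrib)
    also have "\<dots> = 1" unfolding rowsum card using dpos by (simp add: field_simps power2_eq_square)
    finally show ?thesis .
  qed
  have rsum_col: "(\<Sum>i\<in>UNIV. r i j) = 1" for j
  proof -
    have "(\<Sum>i\<in>UNIV. r i j) = ((\<Sum>i\<in>UNIV. F$i$j) + real CARD('n) / real d) / (real d + 1)"
      unfolding r_def by (simp add: sum_divide_distrib[symmetric] sum.distrib)
    also have "\<dots> = 1" unfolding colsum card using dpos by (simp add: field_simps power2_eq_square)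
    finally show ?thesis .
  qed
  have rnn: "r i j \<ge> 0" for i j
  proof -
    define w where "w = (\<chi> j. r i j :: real^'n)"
    have "w \<in> polar d Q"
      unfolding polar_def unit_sum_hyperplane_def
    proof (intro CollectI conjI ballI)
      show "(\<Sum>j\<in>UNIV. w $ j) = 1" unfolding w_def using rsum_row by simp
    next
      fix v assume v: "v \<in> Q"
      have "w \<bullet> v = (\<Sum>j\<in>UNIV. F$i$j * v$j + (1 / real d) * v$j) / (real d + 1)"
        unfolding w_def inner_sum_eq r_def by (simp add: sum_divide_distrib algebra_simps)
      also have "\<dots> = ((F *v v)$i + 1 / real d) / (real d + 1)"
        unfolding matrix_vector_mult_def using Qsum[OF v] by (simp add: sum.distrib sum_divide_distrib[symmetric])
      finally have e: "w \<bullet> v = (f v $ i + 1 / real d) / (real d + 1)" unfolding Fx .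
      have "f v \<in> Q'" using v fQ by auto
      hence "f v $ i \<ge> 0" by (rule Q'nn)
      hence "1 / (real d * (real d + 1)) \<le> (f v $ i + 1 / real d) / (real d + 1)"
      proof -
        assume h: "f v $ i \<ge> 0"
        have "1 / (real d * (real d + 1)) = (1 / real d) / (real d + 1)" by simp
        also have "\<dots> \<le> (f v $ i + 1 / real d) / (real d + 1)"
          using h dpos by (intro divide_right_mono) auto
        finally show ?thesis .
      qed
      thus "1 / (real d * (real d + 1)) \<le> w \<bullet> v" using e by simp
    qed
    hence "w \<in> Q" using qpQ unfolding qplex_def by simp
    hence "w $ j \<ge> 0" by (rule Qnn)
    thus ?thesis unfolding w_def by simp
  qed
  have meas: "measurement r" unfolding measurement_def using rnn rsum_col by simp
  have SF: "stretched_matrix d r = F"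
  proof -
    have "(real d + 1) * r i j - 1 / real d * (\<Sum>k\<in>UNIV. r i k) = F$i$j" for i j
      unfolding rsum_row unfolding r_def by simp
    thus ?thesis unfolding stretched_matrix_def by (simp add: vec_eq_iff)
  qed
  have img: "Q' = (\<lambda>q. stretched_matrix d r *v q) ` Q" unfolding SF Fx using fQ by simp
  have "meas_apply d r ` Q = (\<lambda>q. stretched_matrix d r *v q) ` Q"
    using meas_apply_eq Qsum by (intro image_cong) auto
  hence tp: "type_preserving d Q r" unfolding type_preserving_def using img qpQ' by simp
  show ?thesis using meas tp img by blast
qed


theorem mainTheorem12:
  fixes d :: nat and Q Q' :: "(real^'n) set"
  assumes "d \<ge> 2" and "CARD('n) = d^2"
    and "qplex d Q" and "qplex d Q'"
  shows "qplex_isomorphic Q Q' \<longleftrightarrow>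
    (\<exists>r :: 'n \<Rightarrow> 'n \<Rightarrow> real. measurement r \<and> type_preserving d Q r \<and>
        Q' = (\<lambda>q. stretched_matrix d r *v q) ` Q)"
proof
  assume "qplex_isomorphic Q Q'"
  then obtain f :: "real^'n \<Rightarrow> real^'n" where "linear f" "f ` Q = Q'"
    "\<forall>q1\<in>Q. \<forall>q2\<in>Q. inner (f q1) (f q2) = inner q1 q2"
    unfolding qplex_isomorphic_def by blast
  thus "\<exists>r :: 'n \<Rightarrow> 'n \<Rightarrow> real. measurement r \<and> type_preserving d Q r \<and>
        Q' = (\<lambda>q. stretched_matrix d r *v q) ` Q"
    using fwd_dir[OF assms] by blast
next
  assume "\<exists>r :: 'n \<Rightarrow> 'n \<Rightarrow> real. measurement r \<and> type_preserving d Q r \<and>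
        Q' = (\<lambda>q. stretched_matrix d r *v q) ` Q"
  then obtain r :: "'n \<Rightarrow> 'n \<Rightarrow> real" where "measurement r" "Q' = (\<lambda>q. stretched_matrix d r *v q) ` Q"
    by blast
  thus "qplex_isomorphic Q Q'" using back_dir[OF assms] by blast
qed

end
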